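(* Assume $r$ is not a codeword of the GRS code (equivalently $\deg R\ge k$). Let $B\in\mathbb F_q[X]^{(\ell+1)\times(\ell+1)}$ represent a basis $B^{(0)},\dots,B^{(\ell)}$ of $M_{s,\ell}$ such that $BW_\ell$ is in weak Popov form. Let $C^{\mathrm{II}}$ be the $(\ell+2)\times(\ell+2)$ matrix whose first row is $(G^{s+1},0,\dots,0)$ and whose $(i+1)$-th row ($i=0,\dots,\ell$) is the coefficient vector (of length $\ell+2$) of $B^{(i)}(X,Y)(Y-R(X))$. Then $\Delta(C^{\mathrm{II}}W_{\ell+1})=(\ell+1)(\deg R-k+1)\le(\ell+1)(n-k)$.
   Context: Let $\mathbb F_q$ be a finite field, $1\le k<n<q$, $\alpha_0,\dots,\alpha_{n-1}$ distinct nonzero elements of $\mathbb F_q$, $w_0,\dots,w_{n-1}$ nonzero elements of $\mathbb F_q$. The GRS code is $\{(w_0f(\alpha_0),\dots,w_{n-1}f(\alpha_{n-1})): f\in\mathbb F_q[X],\deg f<k\}$. Let $r\in\mathbb F_q^n$, $r_i'=r_i/w_i$, $G=\prod_i(X-\alpha_i)$, and $R$ the unique polynomial of degree $<n$ with $R(\alpha_i)=r_i'$. For positive integers $s\le\ell$, $M_{s,\ell}$ is the $\mathbb F_q[X]$-module of all $Q\in\mathbb F_q[X,Y]$ of $Y$-degree at most $\ell$ such that for each $i$, $Q(X+\alpha_i,Y+r_i')$ has no monomials of total degree less than $s$. A polynomial $\sum_tQ_t(X)Y^t$ has coefficient vector $(Q_0,Q_1,\dots)$; a matrix represents a basis if its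 rows are the coefficient vectors of the basis elements. $W_\ell=\mathrm{diag}(1,X^{k-1},\dots,X^{\ell(k-1)})$. For $v\in\mathbb F_q[X]^m$, $\deg v=\max_i\deg v_i$, $\mathrm{LP}(v)=\max\{i:\deg v_i=\deg v\}$; a matrix is in weak Popov form if its rows have pairwise different leading positions. For a square matrix $V$ with rows $v_i$, $\deg V=\sum_i\deg v_i$ and $\Delta(V)=\deg V-\deg\det V$. *)

theory Defs
  imports "HOL-Computational_Algebra.Polynomial" "Jordan_Normal_Form.Determinant"
begin

text \<open>Vectors of length n are functions nat => 'a, only the entries i < n matter.
  Bivariate polynomials sum_t Q_t(X) Y^t of Y-degree at most l are represented by
  their coefficient vectors (Q_0,...,Q_l) :: 'a poly vec of dimension l+1.\<close>

definition grs_code :: "nat \<Rightarrow> nat \<Rightarrow> (nat \<Rightarrow> 'a::field) \<Rightarrow> (nat \<Rightarrow> 'a) \<Rightarrow> (nat \<Rightarrow> 'a) set" where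
  "grs_code n k alpha w = {c. \<exists>f. degree f < k \<and> (\<forall>i<n. c i = w i * poly f (alpha i))}"

definition rprime :: "(nat \<Rightarrow> 'a::field) \<Rightarrow> (nat \<Rightarrow> 'a) \<Rightarrow> nat \<Rightarrow> 'a" where
  "rprime w r i = r i / w i"

definition Gpoly :: "nat \<Rightarrow> (nat \<Rightarrow> 'a::field) \<Rightarrow> 'a poly" where
  "Gpoly n alpha = (\<Prod>i<n. [:- alpha i, 1:])"

definition Rpoly :: "nat \<Rightarrow> (nat \<Rightarrow> 'a::field) \<Rightarrow> (nat \<Rightarrow> 'a) \<Rightarrow> 'a poly" where
  "Rpoly n alpha r' = (THE R. degree R < n \<and> (\<forall>i<n. poly R (alpha i) = r' i))"

text \<open>Coefficient of X^h Y^j in Q(X+a, Y+b).\<close>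
definition shift_coeff :: "'a::field \<Rightarrow> 'a \<Rightarrow> 'a poly vec \<Rightarrow> nat \<Rightarrow> nat \<Rightarrow> 'a" where
  "shift_coeff a b Q h j =
     (\<Sum>t<dim_vec Q. of_nat (t choose j) * b ^ (t - j) * coeff (pcompose (Q $ t) [:a, 1:]) h)"

definition M_module :: "nat \<Rightarrow> (nat \<Rightarrow> 'a::field) \<Rightarrow> (nat \<Rightarrow> 'a) \<Rightarrow> nat \<Rightarrow> nat \<Rightarrow> 'a poly vec set" where
  "M_module n alpha r' s l = {Q. dim_vec Q = l + 1 \<and>
     (\<forall>i<n. \<forall>h j. h + j < s \<longrightarrow> shift_coeff (alpha i) (r' i) Q h j = 0)}"

definition represents_basis :: "'a::field poly mat \<Rightarrow> nat \<Rightarrow> 'a poly vec set \<Rightarrow> bool" where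
  "represents_basis B m M \<longleftrightarrow> B \<in> carrier_mat m m \<and> (\<forall>i<m. row B i \<in> M) \<and>
     (\<forall>Q\<in>M. \<exists>!c. c \<in> carrier_vec m \<and> Q = transpose_mat B *\<^sub>v c)"

definition W_mat :: "nat \<Rightarrow> nat \<Rightarrow> 'a::field poly mat" where
  "W_mat k l = mat (l + 1) (l + 1) (\<lambda>(i, j). if i = j then monom 1 (i * (k - 1)) else 0)"

definition vdeg :: "'a::zero poly vec \<Rightarrow> nat" where
  "vdeg v = Max (insert 0 {degree (v $ i) | i. i < dim_vec v \<and> v $ i \<noteq> 0})"

definition LP :: "'a::zero poly vec \<Rightarrow> nat" where
  "LP v = Max {i. i < dim_vec v \<and> v $ i \<noteq> 0 \<and> degree (v $ i) = vdeg v}"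

definition weak_popov :: "'a::zero poly mat \<Rightarrow> bool" where
  "weak_popov V \<longleftrightarrow> (\<forall>i<dim_row V. row V i \<noteq> 0\<^sub>v (dim_col V)) \<and>
     (\<forall>i<dim_row V. \<forall>j<dim_row V. i \<noteq> j \<longrightarrow> LP (row V i) \<noteq> LP (row V j))"

definition mdeg :: "'a::zero poly mat \<Rightarrow> nat" where
  "mdeg V = (\<Sum>i<dim_row V. vdeg (row V i))"

definition Delta :: "'a::field poly mat \<Rightarrow> int" where
  "Delta V = int (mdeg V) - int (degree (det V))"

text \<open>Coefficient vector of Q(X,Y) * (Y - R(X)) (length one more).\<close>
definition mult_Y_minus :: "'a::field poly \<Rightarrow> 'a poly vec \<Rightarrow> 'a poly vec" where
  "mult_Y_minus R v = vec (dim_vec v + 1)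
     (\<lambda>t. (if 0 < t then v $ (t - 1) else 0) - (if t < dim_vec v then R * v $ t else 0))"

definition C_II :: "'a::field poly \<Rightarrow> nat \<Rightarrow> 'a poly \<Rightarrow> nat \<Rightarrow> 'a poly mat \<Rightarrow> 'a poly mat" where
  "C_II G s R l B = mat (l + 2) (l + 2) (\<lambda>(a, b).
     if a = 0 then (if b = 0 then G ^ (s + 1) else 0)
     else mult_Y_minus R (row B (a - 1)) $ b)"

end

theory Submission
  imports Defs
begin


lemma coeff_mult_bound:
  fixes p q :: "'a::comm_semiring_0 poly"
  assumes "degree p \<le> a" "degree q \<le> b"
  shows "coeff (p * q) (a + b) = coeff p a * coeff q b"
proof -
  have "coeff (p * q) (a + b) = (\<Sum>i\<le>a+b. coeff p i * coeff q (a + b - i))"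
    by (rule coeff_mult)
  also have "\<dots> = (\<Sum>i\<in>{a}. coeff p i * coeff q (a + b - i))"
  proof (rule sum.mono_neutral_right)
    show "\<forall>i\<in>{..a + b} - {a}. coeff p i * coeff q (a + b - i) = 0"
    proof
      fix i assume "i \<in> {..a + b} - {a}"
      then consider "i < a" | "i > a" by (metis DiffE insertCI linorder_neqE_nat)
      then show "coeff p i * coeff q (a + b - i) = 0"
      proof cases
        case 1 then have "coeff q (a + b - i) = 0" using assms(2) by (intro coeff_eq_0) auto
        then show ?thesis by simp
      next
        case 2 then have "coeff p i = 0" using assms(1) by (intro coeff_eq_0) auto
        then show ?thesis by simp
      qed
    qed
  qed auto
  finally show ?thesis by simp
qed

lemma coeff_prod_bound:
  fixes f :: "'b \<Rightarrow> 'a::comm_semiring_1 poly"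
  assumes "finite A" "\<And>i. i \<in> A \<Longrightarrow> degree (f i) \<le> d i"
  shows "coeff (\<Prod>i\<in>A. f i) (\<Sum>i\<in>A. d i) = (\<Prod>i\<in>A. coeff (f i) (d i))"
  using assms
proof (induction A rule: finite_induct)
  case empty then show ?case by simp
next
  case (insert x F)
  have dF: "degree (\<Prod>i\<in>F. f i) \<le> (\<Sum>i\<in>F. d i)"
    by (rule order.trans[OF degree_prod_sum_le[OF insert(1)]]) (auto intro!: sum_mono insert(4))
  have "coeff (\<Prod>i\<in>insert x F. f i) (\<Sum>i\<in>insert x F. d i)
      = coeff (f x * (\<Prod>i\<in>F. f i)) (d x + (\<Sum>i\<in>F. d i))" using insert by simp
  also have "\<dots> = coeff (f x) (d x) * coeff (\<Prod>i\<in>F. f i) (\<Sum>i\<in>F. d i)"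
    by (rule coeff_mult_bound[OF insert(4) dF]) simp
  also have "\<dots> = (\<Prod>i\<in>insert x F. coeff (f i) (d i))" using insert by simp
  finally show ?case .
qed

lemma perm_le_eq:
  fixes \<sigma> p :: "nat \<Rightarrow> nat"
  assumes s: "\<sigma> permutes {0..<m}" and p: "p permutes {0..<m}"
    and le: "\<And>i. i < m \<Longrightarrow> \<sigma> i \<le> p i"
  shows "\<sigma> = p"
proof -
  have "(\<Sum>i\<in>{0..<m}. \<sigma> i) = (\<Sum>i\<in>{0..<m}. i)"
    using sum.permute[OF s, of "\<lambda>i. i"] by simp
  moreover have "(\<Sum>i\<in>{0..<m}. p i) = (\<Sum>i\<in>{0..<m}. i)"
    using sum.permute[OF p, of "\<lambda>i. i"] by simp
  ultimately have eq: "(\<Sum>i\<in>{0..<m}. \<sigma> i) = (\<Sum>i\<in>{0..<m}. p i)" by simp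
  have "\<forall>i<m. \<sigma> i = p i"
  proof (rule ccontr)
    assume "\<not> (\<forall>i<m. \<sigma> i = p i)"
    then obtain j where j: "j < m" "\<sigma> j \<noteq> p j" by auto
    with le have "\<sigma> j < p j" by (simp add: order_less_le)
    then have "(\<Sum>i\<in>{0..<m}. \<sigma> i) < (\<Sum>i\<in>{0..<m}. p i)"
      using j le by (intro sum_strict_mono_ex1) auto
    with eq show False by simp
  qed
  moreover have "\<forall>i. i \<ge> m \<longrightarrow> \<sigma> i = p i"
    using permutes_not_in[OF s] permutes_not_in[OF p] by auto
  ultimately show ?thesis by (metis not_le ext)
qed

lemma vdeg_fin: "finite {degree (v $ i) | i. i < dim_vec v \<and> v $ i \<noteq> 0}"
  by (rule finite_subset[of _ "(\<lambda>i. degree (v $ i)) ` {..<dim_vec v}"]) auto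

lemma vdeg_ge: "i < dim_vec v \<Longrightarrow> degree (v $ i) \<le> vdeg v"
  unfolding vdeg_def
  by (cases "v $ i = 0") (auto intro!: Max_ge vdeg_fin)

lemma vdeg_le: "(\<And>i. i < dim_vec v \<Longrightarrow> v $ i \<noteq> 0 \<Longrightarrow> degree (v $ i) \<le> d) \<Longrightarrow> vdeg v \<le> d"
  unfolding vdeg_def using vdeg_fin[of v] by (auto intro!: Max.boundedI)

lemma vdeg_attained:
  assumes "v \<noteq> 0\<^sub>v (dim_vec v)"
  shows "\<exists>i<dim_vec v. v $ i \<noteq> 0 \<and> degree (v $ i) = vdeg v"
proof -
  from assms obtain j where j: "j < dim_vec v" "v $ j \<noteq> 0" by (auto simp: vec_eq_iff)
  let ?S = "{degree (v $ i) | i. i < dim_vec v \<and> v $ i \<noteq> 0}"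
  have ne: "?S \<noteq> {}" using j by auto
  have "vdeg v = Max ?S" unfolding vdeg_def
    using ne vdeg_fin[of v] by (simp add: Max_insert)
  moreover have "Max ?S \<in> ?S" using ne vdeg_fin[of v] by (rule Max_in[rotated])
  ultimately show ?thesis by auto
qed

lemma LP_props:
  assumes "v \<noteq> 0\<^sub>v (dim_vec v)"
  shows "LP v < dim_vec v" "v $ LP v \<noteq> 0" "degree (v $ LP v) = vdeg v"
    "\<And>j. j < dim_vec v \<Longrightarrow> v $ j \<noteq> 0 \<Longrightarrow> degree (v $ j) = vdeg v \<Longrightarrow> j \<le> LP v"
proof -
  let ?S = "{i. i < dim_vec v \<and> v $ i \<noteq> 0 \<and> degree (v $ i) = vdeg v}"
  have fin: "finite ?S" by auto
  have ne: "?S \<noteq> {}" using vdeg_attained[OF assms] by auto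
  have "LP v \<in> ?S" unfolding LP_def using fin ne by (rule Max_in)
  then show "LP v < dim_vec v" "v $ LP v \<noteq> 0" "degree (v $ LP v) = vdeg v" by auto
  fix j assume "j < dim_vec v" "v $ j \<noteq> 0" "degree (v $ j) = vdeg v"
  then show "j \<le> LP v" unfolding LP_def using fin by (intro Max_ge) auto
qed

lemma of_int_mult_poly: "(of_int c :: 'a::comm_ring_1 poly) * q = smult (of_int c) q"
  by (simp add: of_int_poly)

lemma weak_popov_deg_det:
  fixes V :: "'a::field poly mat"
  assumes V: "V \<in> carrier_mat m m" and wp: "weak_popov V"
  shows "det V \<noteq> 0 \<and> degree (det V) = mdeg V"
proof -
  define d where "d i = vdeg (row V i)" for i
  define p where "p i = (if i < m then LP (row V i) else i)" for i
  have nz: "row V i \<noteq> 0\<^sub>v (dim_vec (row V i))" if "i < m" for i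
    using wp that V unfolding weak_popov_def by auto
  have dimr: "dim_vec (row V i) = m" for i using V by auto
  have P1: "p i < m" "V $$ (i, p i) \<noteq> 0" "degree (V $$ (i, p i)) = d i" if "i < m" for i
    using LP_props[OF nz[OF that]] that V unfolding p_def d_def by (auto simp: dimr)
  have P2: "degree (V $$ (i, j)) \<le> d i" if "i < m" "j < m" for i j
    using vdeg_ge[of j "row V i"] that V unfolding d_def by (auto simp: dimr)
  have P3: "coeff (V $$ (i, j)) (d i) = 0" if "i < m" "j < m" "p i < j" for i j
  proof (rule ccontr)
    assume c: "coeff (V $$ (i, j)) (d i) \<noteq> 0"
    then have "d i \<le> degree (V $$ (i, j))" by (rule le_degree)
    with P2[OF that(1,2)] have "degree (V $$ (i, j)) = d i" by simp
    moreover have "V $$ (i, j) \<noteq> 0" using c by auto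
    ultimately have "j \<le> LP (row V i)"
      using LP_props(4)[OF nz[OF that(1)], of j] that V unfolding d_def by (auto simp: dimr)
    with that show False unfolding p_def by simp
  qed
  have pperm: "p permutes {0..<m}"
  proof (rule inj_imp_permutes)
    show "inj_on p {0..<m}"
    proof (rule inj_onI)
      fix i j assume "i \<in> {0..<m}" "j \<in> {0..<m}" "p i = p j"
      then show "i = j" using wp V unfolding weak_popov_def p_def by auto
    qed
  qed (use P1(1) in \<open>auto simp: p_def\<close>)
  define D where "D = (\<Sum>i\<in>{0..<m}. d i)"
  define tm where "tm \<sigma> = signof \<sigma> * (\<Prod>i = 0..<m. V $$ (i, \<sigma> i))" for \<sigma> :: "nat \<Rightarrow> nat"
  have detV: "det V = (\<Sum>\<sigma>\<in>{\<sigma>. \<sigma> permutes {0..<m}}. tm \<sigma>)"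
    unfolding det_def'[OF V] tm_def by simp
  have ctm: "coeff (tm \<sigma>) D = of_int (sign \<sigma>) * (\<Prod>i = 0..<m. coeff (V $$ (i, \<sigma> i)) (d i))"
    if "\<sigma> permutes {0..<m}" for \<sigma>
  proof -
    have "coeff (\<Prod>i = 0..<m. V $$ (i, \<sigma> i)) D = (\<Prod>i = 0..<m. coeff (V $$ (i, \<sigma> i)) (d i))"
      unfolding D_def using permutes_in_image[OF that] by (intro coeff_prod_bound) (auto intro!: P2)
    then show ?thesis unfolding tm_def of_int_mult_poly by simp
  qed
  have dtm: "degree (tm \<sigma>) \<le> D" if "\<sigma> permutes {0..<m}" for \<sigma>
  proof -
    have "degree (\<Prod>i = 0..<m. V $$ (i, \<sigma> i)) \<le> (\<Sum>i = 0..<m. degree (V $$ (i, \<sigma> i)))"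
      using degree_prod_sum_le[of "{0..<m}" "\<lambda>i. V $$ (i, \<sigma> i)"] by (simp add: o_def)
    also have "\<dots> \<le> D" unfolding D_def using permutes_in_image[OF that]
      by (intro sum_mono) (auto intro!: P2)
    finally show ?thesis unfolding tm_def of_int_mult_poly using degree_smult_le order.trans by blast
  qed
  have zero: "coeff (tm \<sigma>) D = 0" if "\<sigma> permutes {0..<m}" "\<sigma> \<noteq> p" for \<sigma>
  proof -
    have "\<not> (\<forall>i<m. \<sigma> i \<le> p i)" using perm_le_eq[OF that(1) pperm] that(2) by blast
    then obtain i where i: "i < m" "p i < \<sigma> i" by (auto simp: not_le)
    have "coeff (V $$ (i, \<sigma> i)) (d i) = 0"
      using P3[OF i(1) _ i(2)] permutes_in_image[OF that(1)] i by auto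
    then have "(\<Prod>i = 0..<m. coeff (V $$ (i, \<sigma> i)) (d i)) = 0"
      using i by (intro prod_zero[of "{0..<m}"]) auto
    then show ?thesis using ctm[OF that(1)] by simp
  qed
  have "coeff (det V) D = (\<Sum>\<sigma>\<in>{\<sigma>. \<sigma> permutes {0..<m}}. coeff (tm \<sigma>) D)"
    unfolding detV coeff_sum ..
  also have "\<dots> = (\<Sum>\<sigma>\<in>{p}. coeff (tm \<sigma>) D)"
    using pperm zero by (intro sum.mono_neutral_right) (auto simp: finite_permutations)
  also have "\<dots> = of_int (sign p) * (\<Prod>i = 0..<m. coeff (V $$ (i, p i)) (d i))"
    using ctm[OF pperm] by simp
  also have "\<dots> \<noteq> 0"
  proof -
    have "(\<Prod>i = 0..<m. coeff (V $$ (i, p i)) (d i)) \<noteq> 0"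
      using P1 by (auto simp: prod_zero_iff) (metis leading_coeff_0_iff)
    moreover have "(of_int (sign p) :: 'a) \<noteq> 0" by (cases rule: sign_cases[of p]) auto
    ultimately show ?thesis by simp
  qed
  finally have c: "coeff (det V) D \<noteq> 0" .
  then have "det V \<noteq> 0" by auto
  moreover have "D \<le> degree (det V)" using c by (rule le_degree)
  moreover have "degree (det V) \<le> D" unfolding detV
    by (rule degree_sum_le) (auto simp: finite_permutations dtm)
  moreover have "mdeg V = D" unfolding mdeg_def D_def d_def using V by (simp add: atLeast0LessThan)
  ultimately show ?thesis by simp
qed



lemma W_carrier: "W_mat k l \<in> carrier_mat (l+1) (l+1)"
  unfolding W_mat_def by simp

lemma mult_W_index:
  assumes A: "A \<in> carrier_mat m (l+1)" and i: "i < m" and j: "j < l+1"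
  shows "(A * W_mat k l) $$ (i, j) = A $$ (i, j) * monom 1 (j * (k - 1))"
proof -
  have "(A * W_mat k l) $$ (i, j) = (\<Sum>c = 0..<l+1. A $$ (i, c) * (if c = j then monom 1 (c * (k - 1)) else 0))"
    using A i j unfolding W_mat_def by (simp add: scalar_prod_def)
  also have "\<dots> = (\<Sum>c = 0..<l+1. (if c = j then A $$ (i, c) * monom 1 (j * (k - 1)) else 0))"
    by (rule sum.cong) auto
  also have "\<dots> = A $$ (i, j) * monom 1 (j * (k - 1))" by (simp only: sum.delta finite_atLeastLessThan) (use j in auto)
  finally show ?thesis .
qed

lemma prod_list_monom: "prod_list (map (\<lambda>i. monom (1::'a::comm_semiring_1) (i * c)) [0..<N]) = monom 1 (\<Sum>i<N. i * c)"
  by (induction N) (auto simp: mult_monom)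

lemma det_W: "det (W_mat k l :: 'a::field poly mat) = monom 1 (\<Sum>i<l+1. i * (k - 1))"
proof -
  have "det (W_mat k l :: 'a poly mat) = prod_list (diag_mat (W_mat k l))"
    by (rule det_upper_triangular[OF _ W_carrier]) (auto simp: W_mat_def upper_triangular_def)
  also have "diag_mat (W_mat k l :: 'a poly mat) = map (\<lambda>i. monom 1 (i * (k - 1))) [0..<l+1]"
    unfolding diag_mat_def W_mat_def by (intro map_cong) auto
  finally show ?thesis using prod_list_monom by metis
qed

lemma det_C_II:
  fixes B :: "'a::field poly mat"
  assumes B: "B \<in> carrier_mat (l+1) (l+1)"
  shows "det (C_II G s R l B) = G ^ (s + 1) * det B"
proof -
  let ?C = "C_II G s R l B"
  have C: "?C \<in> carrier_mat (l+2) (l+2)" unfolding C_II_def by simp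
  have "det ?C = (\<Sum>j<Suc (l+1). ?C $$ (0, j) * cofactor ?C 0 j)"
    using laplace_expansion_row[OF C, of 0] by simp
  also have "\<dots> = ?C $$ (0, 0) * cofactor ?C 0 0"
    unfolding sum.lessThan_Suc_shift by (simp add: C_II_def)
  also have "\<dots> = G ^ (s + 1) * det (mat_delete ?C 0 0)"
    unfolding cofactor_def by (simp add: C_II_def)
  also have "mat_delete ?C 0 0 = B * mat (l+1) (l+1) (\<lambda>(a, c). (if a = c then 1 else 0) - (if a = Suc c then R else 0))"
    (is "_ = B * ?U")
  proof (rule eq_matI)
    fix i j assume ij: "i < dim_row (B * ?U)" "j < dim_col (B * ?U)"
    then have i: "i < l+1" and j: "j < l+1" using B by auto
    have "(B * ?U) $$ (i, j) = (\<Sum>a = 0..<l+1. B $$ (i, a) * ((if a = j then 1 else 0) - (if a = Suc j then R else 0)))"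
      using B i j by (simp add: scalar_prod_def)
    also have "\<dots> = (\<Sum>a = 0..<l+1. (if a = j then B $$ (i, a) else 0)) - (\<Sum>a = 0..<l+1. (if a = Suc j then B $$ (i, a) * R else 0))"
      unfolding sum_subtractf[symmetric] by (rule sum.cong) (auto simp: right_diff_distrib)
    also have "\<dots> = B $$ (i, j) - (if Suc j < l+1 then R * B $$ (i, Suc j) else 0)"
      by (simp only: sum.delta finite_atLeastLessThan) (use j in \<open>auto simp: mult.commute\<close>)
    also have "\<dots> = mat_delete ?C 0 0 $$ (i, j)"
      using B i j by (simp add: mat_delete_def C_II_def mult_Y_minus_def)
    finally show "mat_delete ?C 0 0 $$ (i, j) = (B * ?U) $$ (i, j)" by simp
  qed (use B in \<open>auto simp: mat_delete_def C_II_def\<close>)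
  also have "det (B * ?U) = det B * det ?U"
    by (rule det_mult[OF B]) (simp add: carrier_matI)
  also have "det ?U = 1"
  proof -
    have "det ?U = prod_list (diag_mat ?U)"
      by (rule det_lower_triangular[where n="l+1"]) auto
    also have "diag_mat ?U = map (\<lambda>_. 1) [0..<l+1]" unfolding diag_mat_def by (intro map_cong) auto
    finally show ?thesis by (simp add: map_replicate_const)
  qed
  finally show ?thesis by simp
qed



lemma vdeg_shift:
  fixes v u :: "'a::field poly vec"
  assumes dv: "dim_vec v = N" and du: "dim_vec u = Suc N" and nz: "v \<noteq> 0\<^sub>v N"
    and c: "c < degree R"
    and u: "\<And>b. b < Suc N \<Longrightarrow> u $ b = (if 0 < b then v $ (b-1) * monom 1 c else 0) - (if b < N then R * v $ b else 0)"
  shows "vdeg u = degree R + vdeg v"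
proof (rule antisym)
  show "vdeg u \<le> degree R + vdeg v"
  proof (rule vdeg_le)
    fix b assume b: "b < dim_vec u"
    have h1: "degree (if 0 < b then v $ (b-1) * monom 1 c else 0) \<le> degree R + vdeg v"
    proof (cases "0 < b")
      case True
      have "degree (v $ (b-1) * monom 1 c) \<le> degree (v $ (b-1)) + degree (monom (1::'a) c)"
        by (rule degree_mult_le)
      also have "\<dots> \<le> vdeg v + c" using vdeg_ge[of "b-1" v] b du dv True degree_monom_le[of "1::'a" c]
        by (intro add_mono) auto
      finally show ?thesis using True c by simp
    qed simp
    have h2: "degree (if b < N then R * v $ b else 0) \<le> degree R + vdeg v"
    proof (cases "b < N")
      case True
      have "degree (R * v $ b) \<le> degree R + degree (v $ b)" by (rule degree_mult_le)
      also have "\<dots> \<le> degree R + vdeg v" using vdeg_ge[of b v] True dv by simp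
      finally show ?thesis using True by simp
    qed simp
    show "degree (u $ b) \<le> degree R + vdeg v" using u[of b] b du degree_diff_le[OF h1 h2] by simp
  qed
next
  have "v \<noteq> 0\<^sub>v (dim_vec v)" using nz dv by simp
  from vdeg_attained[OF this] obtain j where j: "j < N" "v $ j \<noteq> 0" "degree (v $ j) = vdeg v"
    using dv by auto
  have R0: "R \<noteq> 0" using c by auto
  define P where "P = (if 0 < j then v $ (j-1) * monom 1 c else 0)"
  have dP: "degree P \<le> vdeg v + c"
  proof (cases "0 < j")
    case True
    have "degree (v $ (j-1) * monom 1 c) \<le> degree (v $ (j-1)) + degree (monom (1::'a) c)"
      by (rule degree_mult_le)
    also have "\<dots> \<le> vdeg v + c" using vdeg_ge[of "j-1" v] j dv True degree_monom_le[of "1::'a" c]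
      by (intro add_mono) auto
    finally show ?thesis using True unfolding P_def by simp
  qed (simp add: P_def)
  have dQ: "degree (R * v $ j) = degree R + vdeg v" using degree_mult_eq[OF R0 j(2)] j by simp
  have uj: "u $ j = P + - (R * v $ j)" using u[of j] j unfolding P_def by simp
  have "degree (u $ j) = degree R + vdeg v"
    unfolding uj using dP c dQ by (subst degree_add_eq_right) auto
  moreover have "u $ j \<noteq> 0" using calculation c by auto
  ultimately show "degree R + vdeg v \<le> vdeg u" using vdeg_ge[of j u] du j by simp
qed

lemma lagrange_exists:
  fixes alpha :: "nat \<Rightarrow> 'a::field"
  assumes inj: "inj_on alpha {..<n}" and n: "1 \<le> n"
  shows "\<exists>R. degree R < n \<and> (\<forall>i<n. poly R (alpha i) = y i)"
proof -
  define L where "L i = (\<Prod>j\<in>{..<n}-{i}. [:- alpha j, 1:])" for i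
  define R where "R = (\<Sum>i<n. smult (y i / (\<Prod>j\<in>{..<n}-{i}. (alpha i - alpha j))) (L i))"
  have dL: "degree (L i) \<le> n - 1" if "i < n" for i
  proof -
    have "degree (L i) \<le> (\<Sum>j\<in>{..<n}-{i}. degree [:- alpha j, 1:])"
      unfolding L_def using degree_prod_sum_le[of "{..<n}-{i}" "\<lambda>j. [:- alpha j, 1:]"] by (simp add: o_def)
    also have "\<dots> = n - 1" using that by simp
    finally show ?thesis .
  qed
  have "degree R \<le> n - 1" unfolding R_def
  proof (rule degree_sum_le)
    fix i assume "i \<in> {..<n}"
    then have "degree (L i) \<le> n - 1" using dL by simp
    moreover have "degree (smult (y i / (\<Prod>j\<in>{..<n}-{i}. (alpha i - alpha j))) (L i)) \<le> degree (L i)"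
      by (rule degree_smult_le)
    ultimately show "degree (smult (y i / (\<Prod>j\<in>{..<n}-{i}. (alpha i - alpha j))) (L i)) \<le> n - 1"
      by linarith
  qed simp
  then have "degree R < n" using n by simp
  moreover have "poly R (alpha m) = y m" if m: "m < n" for m
  proof -
    have pL: "poly (L i) (alpha m) = (\<Prod>j\<in>{..<n}-{i}. (alpha m - alpha j))" for i
      unfolding L_def poly_prod by simp
    have z: "poly (L i) (alpha m) = 0" if "i < n" "i \<noteq> m" for i
      unfolding pL by (rule prod_zero) (use m that in \<open>auto intro!: bexI[of _ m]\<close>)
    have nzp: "(\<Prod>j\<in>{..<n}-{m}. (alpha m - alpha j)) \<noteq> 0"
    proof -
      have "\<forall>j\<in>{..<n}-{m}. alpha m - alpha j \<noteq> 0" using m inj by (auto dest: inj_onD)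
      then show ?thesis by (simp add: prod_zero_iff)
    qed
    have "poly R (alpha m) = (\<Sum>i<n. y i / (\<Prod>j\<in>{..<n}-{i}. (alpha i - alpha j)) * poly (L i) (alpha m))"
      unfolding R_def poly_sum by simp
    also have "\<dots> = (\<Sum>i\<in>{m}. y i / (\<Prod>j\<in>{..<n}-{i}. (alpha i - alpha j)) * poly (L i) (alpha m))"
      using m z by (intro sum.mono_neutral_right) simp_all
    also have "\<dots> = y m" using nzp unfolding pL by simp
    finally show ?thesis .
  qed
  ultimately show ?thesis by blast
qed

lemma Rpoly_props:
  fixes alpha :: "nat \<Rightarrow> 'a::field"
  assumes inj: "inj_on alpha {..<n}" and n: "1 \<le> n"
  shows "degree (Rpoly n alpha y) < n \<and> (\<forall>i<n. poly (Rpoly n alpha y) (alpha i) = y i)"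
proof -
  obtain R where R: "degree R < n \<and> (\<forall>i<n. poly R (alpha i) = y i)"
    using lagrange_exists[OF inj n] by blast
  have cd: "card (alpha ` {..<n}) = n" using card_image[OF inj] by simp
  have uq: "Q = R" if Q: "degree Q < n \<and> (\<forall>i<n. poly Q (alpha i) = y i)" for Q
  proof (rule poly_eqI_degree[of "alpha ` {..<n}"])
    show "degree Q < card (alpha ` {..<n})" "degree R < card (alpha ` {..<n})" using Q R cd by simp_all
    fix x assume "x \<in> alpha ` {..<n}"
    then obtain i where "i < n" "x = alpha i" by auto
    then show "poly Q x = poly R x" using Q R by simp
  qed
  have "Rpoly n alpha y = R" unfolding Rpoly_def
    by (rule the_equality) (use R uq in blast)+
  then show ?thesis using R by simp
qed



theorem lemma10:
  fixes alpha w r :: "nat \<Rightarrow> 'a::{finite, field}"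
    and n k s l :: nat and B :: "'a poly mat"
  assumes "1 \<le> k" "k < n" "n < card (UNIV :: 'a set)"
    and "inj_on alpha {..<n}" "\<forall>i<n. alpha i \<noteq> 0" "\<forall>i<n. w i \<noteq> 0"
    and "1 \<le> s" "s \<le> l"
    and "r \<notin> grs_code n k alpha w"
    and "represents_basis B (l + 1) (M_module n alpha (rprime w r) s l)"
    and "weak_popov (B * W_mat k l)"
  shows "Delta (C_II (Gpoly n alpha) s (Rpoly n alpha (rprime w r)) l B * W_mat k (l + 1))
           = int (l + 1) * (int (degree (Rpoly n alpha (rprime w r))) - int k + 1)
       \<and> int (l + 1) * (int (degree (Rpoly n alpha (rprime w r))) - int k + 1)
           \<le> int (l + 1) * (int n - int k)"
proof -
  note k1 = assms(1) and kn = assms(2) and inj = assms(4) and wnz = assms(6)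
  define G where "G = Gpoly n alpha"
  define R where "R = Rpoly n alpha (rprime w r)"
  define C where "C = C_II G s R l B"
  define BW where "BW = B * W_mat k l"
  define CW where "CW = C * W_mat k (l + 1)"
  define TW where "TW N = (\<Sum>i<N. i * (k - 1))" for N
  have B: "B \<in> carrier_mat (l+1) (l+1)" using assms(10) unfolding represents_basis_def by simp
  have C: "C \<in> carrier_mat (l+2) (l+2)" unfolding C_def C_II_def by simp
  have BWc: "BW \<in> carrier_mat (l+1) (l+1)" unfolding BW_def using mult_carrier_mat[OF B W_carrier] by simp
  have Wc1: "W_mat k (l+1) \<in> carrier_mat (l+2) (l+2)" using W_carrier[of k "l+1"] by simp
  have CWc: "CW \<in> carrier_mat (l+2) (l+2)" unfolding CW_def using mult_carrier_mat[OF C Wc1] by simp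
  have Rp: "degree R < n \<and> (\<forall>i<n. poly R (alpha i) = rprime w r i)"
    unfolding R_def by (rule Rpoly_props[OF inj]) (use kn k1 in simp)
  have Rk: "k \<le> degree R"
  proof (rule ccontr)
    assume "\<not> k \<le> degree R"
    then have "degree R < k" by simp
    moreover have "\<forall>i<n. r i = w i * poly R (alpha i)"
      using Rp wnz by (simp add: rprime_def)
    ultimately have "r \<in> grs_code n k alpha w" unfolding grs_code_def by blast
    with assms(9) show False by simp
  qed
  have G0: "G \<noteq> 0" unfolding G_def Gpoly_def by (simp add: prod_zero_iff)
  have wpBW: "det BW \<noteq> 0 \<and> degree (det BW) = mdeg BW"
    using weak_popov_deg_det[OF BWc] assms(11) unfolding BW_def by simp
  have detBW: "det BW = det B * monom 1 (TW (l+1))"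
    unfolding BW_def TW_def by (simp add: det_mult[OF B W_carrier] det_W)
  have dB0: "det B \<noteq> 0" using wpBW detBW by auto
  have degBW: "mdeg BW = degree (det B) + TW (l+1)"
    using wpBW dB0 unfolding detBW by (simp add: degree_mult_eq degree_monom_eq)
  have detCW: "det CW = G ^ (s+1) * det B * monom 1 (TW (l+2))"
  proof -
    have "det CW = det C * det (W_mat k (l+1))" unfolding CW_def by (rule det_mult[OF C Wc1])
    also have "det C = G ^ (s+1) * det B" unfolding C_def by (rule det_C_II[OF B])
    also have "det (W_mat k (l+1) :: 'a poly mat) = monom 1 (TW (l+2))"
      unfolding TW_def det_W by (simp add: numeral_2_eq_2)
    finally show ?thesis .
  qed
  have degCW: "degree (det CW) = degree (G ^ (s+1)) + degree (det B) + TW (l+2)"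
    unfolding detCW using G0 dB0 by (simp add: degree_mult_eq degree_monom_eq)
  have TW2: "TW (l+2) = TW (l+1) + (l+1) * (k-1)"
    unfolding TW_def by (simp add: numeral_2_eq_2)
  have CWe: "CW $$ (a, b) = C $$ (a, b) * monom 1 (b * (k - 1))" if "a < l+2" "b < l+2" for a b
  proof -
    have C': "C \<in> carrier_mat (l+2) (l+1+1)" using C by simp
    show ?thesis unfolding CW_def using mult_W_index[OF C', of a b k] that by simp
  qed
  have BWe: "BW $$ (a, b) = B $$ (a, b) * monom 1 (b * (k - 1))" if "a < l+1" "b < l+1" for a b
    unfolding BW_def using mult_W_index[OF B, of a b k] that by simp
  have row0: "vdeg (row CW 0) = degree (G ^ (s+1))"
  proof (rule antisym)
    show "vdeg (row CW 0) \<le> degree (G ^ (s+1))"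
    proof (rule vdeg_le)
      fix b assume "b < dim_vec (row CW 0)"
      then have b: "b < l+2" using CWc by simp
      then show "degree (row CW 0 $ b) \<le> degree (G ^ (s+1))"
        using CWe[of 0 b] CWc by (simp add: C_def C_II_def)
    qed
    show "degree (G ^ (s+1)) \<le> vdeg (row CW 0)"
      using vdeg_ge[of 0 "row CW 0"] CWe[of 0 0] CWc by (simp add: C_def C_II_def)
  qed
  have rowS: "vdeg (row CW (Suc a)) = degree R + vdeg (row BW a)" if a: "a < l+1" for a
  proof (rule vdeg_shift[where N = "l+1" and c = "k-1"])
    show "dim_vec (row BW a) = l+1" "dim_vec (row CW (Suc a)) = Suc (l+1)" using BWc CWc by auto
    show "row BW a \<noteq> 0\<^sub>v (l+1)" using assms(11) a BWc B W_carrier[of k l] unfolding weak_popov_def BW_def by auto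
    show "k - 1 < degree R" using Rk k1 by simp
    fix b assume b: "b < Suc (l+1)"
    have Ce: "C $$ (Suc a, b) = (if 0 < b then B $$ (a, b-1) else 0) - (if b < l+1 then R * B $$ (a, b) else 0)"
      using a b B by (simp add: C_def C_II_def mult_Y_minus_def)
    have e1: "(if 0 < b then B $$ (a, b-1) else 0) * monom 1 (b * (k-1)) =
              (if 0 < b then BW $$ (a, b-1) * monom 1 (k-1) else 0)"
    proof (cases b)
      case (Suc b')
      have ar: "b * (k - 1) = b' * (k-1) + (k-1)" using Suc by simp
      have "B $$ (a, b') * monom 1 (b * (k - 1)) = BW $$ (a, b') * monom 1 (k - 1)"
      proof -
        have "b' < l+1" using b Suc by simp
        then have "BW $$ (a, b') * monom 1 (k - 1) = B $$ (a, b') * (monom 1 (b' * (k-1)) * monom 1 (k - 1))"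
          using BWe[of a b'] a by (simp add: mult.assoc)
        also have "\<dots> = B $$ (a, b') * monom 1 (b * (k - 1))" unfolding ar mult_monom by simp
        finally show ?thesis by simp
      qed
      then show ?thesis using Suc by simp
    qed simp
    have e2: "(if b < l+1 then R * B $$ (a, b) else 0) * monom 1 (b * (k-1)) =
              (if b < l+1 then R * BW $$ (a, b) else 0)"
      using BWe[of a b] a by (simp add: mult.assoc)
    show "row CW (Suc a) $ b = (if 0 < b then row BW a $ (b-1) * monom 1 (k-1) else 0) -
            (if b < l+1 then R * row BW a $ b else 0)"
      using CWe[of "Suc a" b] a b CWc BWc Ce e1 e2 by (simp add: left_diff_distrib)
  qed
  have mCW: "mdeg CW = degree (G ^ (s+1)) + (l+1) * degree R + mdeg BW"
  proof -
    have "mdeg CW = (\<Sum>a<Suc (l+1). vdeg (row CW a))" unfolding mdeg_def using CWc by simp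
    also have "\<dots> = vdeg (row CW 0) + (\<Sum>a<l+1. vdeg (row CW (Suc a)))"
      by (simp only: sum.lessThan_Suc_shift)
    also have "(\<Sum>a<l+1. vdeg (row CW (Suc a))) = (\<Sum>a<l+1. degree R + vdeg (row BW a))"
      using rowS by simp
    also have "\<dots> = (l+1) * degree R + mdeg BW" unfolding mdeg_def using BWc by (simp add: sum.distrib)
    finally show ?thesis using row0 by simp
  qed
  have "Delta CW = int (l+1) * (int (degree R) - int k + 1)"
  proof -
    have X: "(l+1)*(k-1) + (l+1) = (l+1)*k" using k1 by (cases k) (auto simp: algebra_simps)
    then have Y: "int ((l+1)*(k-1)) = int (l+1) * int k - int (l+1)"
      by (metis add_diff_cancel_right' of_nat_add of_nat_mult)
    show ?thesis unfolding Delta_def mCW degCW degBW TW2 of_nat_add Y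
      by (simp add: algebra_simps)
  qed
  moreover have "int (l + 1) * (int (degree R) - int k + 1) \<le> int (l + 1) * (int n - int k)"
    using Rp by (intro mult_left_mono) auto
  ultimately show ?thesis unfolding CW_def C_def G_def R_def by simp
qed

end
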